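(* Let $M'=M[D,K]$ be a compatible minor of the weighted uncertainty matroid $\mathcal{M}$ such that $M'$ contains no non-trivial element $f$ with either (a) $w_f=L_f$ and $f$ a maximum-weight element of some circuit of $M'$, or (b) $w_f=U_f$ and $f$ a minimum-weight element of $E(M')\setminus\mathrm{span}_{M'}(B'\setminus\{f\})$ for some basis $B'$ of $M'$ containing $f$. Let $e$ be a trivial element of $M'$ such that (i) there exists a circuit $C$ of $M'$ with $e\in C$ and (ii) $e$ has maximum weight in $C$. Then $M[D\cup\{e\},K]$ is a compatible minor of $\mathcal{M}$.
   Context: A weighted uncertainty matroid $\mathcal{M}=(E,\mathcal{I},A,w)$ consists of a matroid $M=(E,\mathcal{I})$ on a finite set $E$, for each $e\in E$ a non-empty finite union $A_e$ of bounded real intervals (each open or closed), a weight $w_e\in A_e$, and a query cost $c_e\ge0$. $L_e=\inf A_e$, $U_e=\sup A_e$; $e$ is trivial if $A_e=\{w_e\}$. A minimum-weight basis (MWB) is a basis minimizing total weight. A weight assignment is $w^*$ with $w^*_e\in A_e$, consistent with $Q$ if $w^*_e=w_e$ on $Q$. $Q$ verifies an MWB $B$ if for every weight assignment consistent with $Q$, $B$ is an MWB with respect to it; a certificate for $\mathcal{M}$ is a set verifying some MWB, and $c^*$ denotes the minimum cost $\sum_{e\in Q}c_e$ of a certificate for $\mathcal{M}$. For $D,K\subseteq E$, $M[D,K]$ is the matroid obtained from $M$ by deleting $D$ and contracting $K$, ground set $E(M[D,K])=E\setminus(D\cup K)$, weights restricted. $M[D,K]$ is a compatible minor if there is a set $Q$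 of cost $c^*$ verifying an MWB $B$ of $\mathcal{M}$ with $K\subseteq B$, $D\cap B=\emptyset$. $\mathrm{span}_N(X)=\{e: r_N(X\cup\{e\})=r_N(X)\}$. *)

theory Defs
  imports Complex_Main
begin

definition matroid :: "'a set \<Rightarrow> ('a set \<Rightarrow> bool) \<Rightarrow> bool" where
  "matroid E indep \<longleftrightarrow>
     finite E \<and> (\<forall>I. indep I \<longrightarrow> I \<subseteq> E) \<and> indep {} \<and>
     (\<forall>I J. indep J \<and> I \<subseteq> J \<longrightarrow> indep I) \<and>
     (\<forall>I J. indep I \<and> indep J \<and> card I < card J \<longrightarrow> (\<exists>x\<in>J - I. indep (insert x I)))"

definition rank :: "('a set \<Rightarrow> bool) \<Rightarrow> 'a set \<Rightarrow> nat" where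
  "rank indep X = Max (card ` {I. I \<subseteq> X \<and> indep I})"

definition basis :: "'a set \<Rightarrow> ('a set \<Rightarrow> bool) \<Rightarrow> 'a set \<Rightarrow> bool" where
  "basis E indep B \<longleftrightarrow> B \<subseteq> E \<and> indep B \<and> (\<forall>x\<in>E - B. \<not> indep (insert x B))"

definition circuit :: "'a set \<Rightarrow> ('a set \<Rightarrow> bool) \<Rightarrow> 'a set \<Rightarrow> bool" where
  "circuit E indep C \<longleftrightarrow> C \<subseteq> E \<and> \<not> indep C \<and> (\<forall>C'. C' \<subset> C \<longrightarrow> indep C')"

definition span :: "'a set \<Rightarrow> ('a set \<Rightarrow> bool) \<Rightarrow> 'a set \<Rightarrow> 'a set" where
  "span E indep X = {e \<in> E. rank indep (insert e X) = rank indep X}"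

definition minor_ground :: "'a set \<Rightarrow> 'a set \<Rightarrow> 'a set \<Rightarrow> 'a set" where
  "minor_ground E D K = E - (D \<union> K)"

text \<open>Independent sets of (M / K) \ D: I avoids D and K and r(I + K) = |I| + r(K).\<close>
definition minor_indep :: "'a set \<Rightarrow> ('a set \<Rightarrow> bool) \<Rightarrow> 'a set \<Rightarrow> 'a set \<Rightarrow> 'a set \<Rightarrow> bool" where
  "minor_indep E indep D K I \<longleftrightarrow>
     I \<subseteq> E - (D \<union> K) \<and> rank indep (I \<union> K) = card I + rank indep K"

definition uncertainty_set :: "real set \<Rightarrow> bool" where
  "uncertainty_set S \<longleftrightarrow> S \<noteq> {} \<and>
     (\<exists>F. finite F \<and> S = \<Union>F \<and> (\<forall>J\<in>F. \<exists>a b. J = {a..b} \<or> J = {a<..<b}))"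

definition wum :: "'a set \<Rightarrow> ('a set \<Rightarrow> bool) \<Rightarrow> ('a \<Rightarrow> real set) \<Rightarrow> ('a \<Rightarrow> real) \<Rightarrow> ('a \<Rightarrow> real) \<Rightarrow> bool" where
  "wum E indep A w c \<longleftrightarrow> matroid E indep \<and>
     (\<forall>e\<in>E. uncertainty_set (A e) \<and> w e \<in> A e \<and> c e \<ge> 0)"

definition lower :: "('a \<Rightarrow> real set) \<Rightarrow> 'a \<Rightarrow> real" where
  "lower A e = Inf (A e)"

definition upper :: "('a \<Rightarrow> real set) \<Rightarrow> 'a \<Rightarrow> real" where
  "upper A e = Sup (A e)"

definition trivial :: "('a \<Rightarrow> real set) \<Rightarrow> ('a \<Rightarrow> real) \<Rightarrow> 'a \<Rightarrow> bool" where
  "trivial A w e \<longleftrightarrow> A e = {w e}"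

definition is_MWB :: "'a set \<Rightarrow> ('a set \<Rightarrow> bool) \<Rightarrow> ('a \<Rightarrow> real) \<Rightarrow> 'a set \<Rightarrow> bool" where
  "is_MWB E indep w B \<longleftrightarrow> basis E indep B \<and>
     (\<forall>B'. basis E indep B' \<longrightarrow> sum w B \<le> sum w B')"

definition weight_assignment :: "'a set \<Rightarrow> ('a \<Rightarrow> real set) \<Rightarrow> ('a \<Rightarrow> real) \<Rightarrow> bool" where
  "weight_assignment E A w' \<longleftrightarrow> (\<forall>e\<in>E. w' e \<in> A e)"

definition consistent :: "('a \<Rightarrow> real) \<Rightarrow> 'a set \<Rightarrow> ('a \<Rightarrow> real) \<Rightarrow> bool" where
  "consistent w Q w' \<longleftrightarrow> (\<forall>e\<in>Q. w' e = w e)"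

definition verifies :: "'a set \<Rightarrow> ('a set \<Rightarrow> bool) \<Rightarrow> ('a \<Rightarrow> real set) \<Rightarrow> ('a \<Rightarrow> real) \<Rightarrow> 'a set \<Rightarrow> 'a set \<Rightarrow> bool" where
  "verifies E indep A w Q B \<longleftrightarrow>
     (\<forall>w'. weight_assignment E A w' \<and> consistent w Q w' \<longrightarrow> is_MWB E indep w' B)"

definition certificate :: "'a set \<Rightarrow> ('a set \<Rightarrow> bool) \<Rightarrow> ('a \<Rightarrow> real set) \<Rightarrow> ('a \<Rightarrow> real) \<Rightarrow> 'a set \<Rightarrow> bool" where
  "certificate E indep A w Q \<longleftrightarrow> Q \<subseteq> E \<and> (\<exists>B. verifies E indep A w Q B)"

definition opt_cost :: "'a set \<Rightarrow> ('a set \<Rightarrow> bool) \<Rightarrow> ('a \<Rightarrow> real set) \<Rightarrow> ('a \<Rightarrow> real) \<Rightarrow> ('a \<Rightarrow> real) \<Rightarrow> real" where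
  "opt_cost E indep A w c = Min {sum c Q | Q. certificate E indep A w Q}"

definition compatible_minor :: "'a set \<Rightarrow> ('a set \<Rightarrow> bool) \<Rightarrow> ('a \<Rightarrow> real set) \<Rightarrow> ('a \<Rightarrow> real) \<Rightarrow> ('a \<Rightarrow> real) \<Rightarrow> 'a set \<Rightarrow> 'a set \<Rightarrow> bool" where
  "compatible_minor E indep A w c D K \<longleftrightarrow> D \<subseteq> E \<and> K \<subseteq> E \<and>
     (\<exists>Q B. Q \<subseteq> E \<and> sum c Q = opt_cost E indep A w c \<and> verifies E indep A w Q B \<and>
            K \<subseteq> B \<and> D \<inter> B = {})"

end

theory Submission
  imports Defs
begin

lemma unc_bdd_below:
  assumes "uncertainty_set S" shows "bdd_below S"
proof -
  obtain F where F: "finite F" "S = \<Union>F" "\<forall>J\<in>F. \<exists>a b. J = {a..b} \<or> J = {a<..<b}"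
    using assms unfolding uncertainty_set_def by blast
  have "\<forall>J\<in>F. bdd_below J" using F(3) by fastforce
  moreover have "(\<forall>J\<in>F. bdd_below J) \<longrightarrow> bdd_below (\<Union>F)" using F(1)
    by (induct rule: finite_induct) auto
  ultimately show ?thesis using F(2) by simp
qed

lemma rank_indep:
  assumes m: "matroid E indep" and X: "indep X"
  shows "rank indep X = card X"
proof -
  have fin: "finite X" using m X unfolding matroid_def by (meson finite_subset)
  have "finite (card ` {I. I \<subseteq> X \<and> indep I})" using fin by simp
  moreover have "card X \<in> card ` {I. I \<subseteq> X \<and> indep I}" using X by blast
  moreover have "\<forall>k \<in> card ` {I. I \<subseteq> X \<and> indep I}. k \<le> card X"
    using fin card_mono by blast
  ultimately show ?thesis unfolding rank_def by (intro Max_eqI) auto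
qed

lemma rank_dep:
  assumes m: "matroid E indep" and XE: "X \<subseteq> E" and r: "rank indep X = card X"
  shows "indep X"
proof -
  have fin: "finite X" using m XE unfolding matroid_def by (meson finite_subset)
  let ?S = "card ` {I. I \<subseteq> X \<and> indep I}"
  have "finite ?S" using fin by simp
  moreover have "?S \<noteq> {}" using m unfolding matroid_def by blast
  ultimately have "Max ?S \<in> ?S" by (rule Max_in)
  then obtain I where I: "I \<subseteq> X" "indep I" "card I = card X" using r unfolding rank_def by auto
  then have "I = X" using fin card_subset_eq by blast
  then show ?thesis using I by simp
qed

lemma exchange:
  assumes m: "matroid E indep" and b: "basis E indep B" and KB: "K \<subseteq> B"
    and i1: "indep ((C - {e}) \<union> K)" and d: "\<not> indep (C \<union> K)"
    and eC: "e \<in> C" and eB: "e \<in> B" and eK: "e \<notin> K" and CE: "C \<subseteq> E"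
  shows "\<exists>f \<in> C - B. indep (insert f (B - {e}))"
proof (rule ccontr)
  assume H: "\<not> (\<exists>f \<in> C - B. indep (insert f (B - {e})))"
  have finE: "finite E" and sub: "\<And>I. indep I \<Longrightarrow> I \<subseteq> E"
    and down: "\<And>I J. indep J \<Longrightarrow> I \<subseteq> J \<Longrightarrow> indep I"
    and aug: "\<And>I J. indep I \<Longrightarrow> indep J \<Longrightarrow> card I < card J \<Longrightarrow> \<exists>x\<in>J - I. indep (insert x I)"
    using m unfolding matroid_def by blast+
  have BE: "B \<subseteq> E" and iB: "indep B" using b unfolding basis_def by auto
  have finB: "finite B" using BE finE finite_subset by blast
  have iB0: "indep (B - {e})" using down iB by blast
  define X where "X = (C - {e}) \<union> K"
  define Y where "Y = X \<union> (B - {e})"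
  define S where "S = {I. X \<subseteq> I \<and> I \<subseteq> Y \<and> indep I}"
  have YE: "Y \<subseteq> E" using CE KB BE unfolding Y_def X_def by auto
  have finY: "finite Y" using YE finE finite_subset by blast
  have "S \<subseteq> Pow Y" unfolding S_def by blast
  then have finS: "finite S" using finY finite_subset by blast
  have XS: "X \<in> S" unfolding S_def Y_def using i1 X_def by auto
  let ?m = "Max (card ` S)"
  have "?m \<in> card ` S" using finS XS by (intro Max_in) auto
  then obtain I where IS: "I \<in> S" and Imax: "card I = ?m" by auto
  have Imax2: "\<And>I'. I' \<in> S \<Longrightarrow> card I' \<le> card I" using Imax finS by simp
  have XI: "X \<subseteq> I" and IY: "I \<subseteq> Y" and iI: "indep I" using IS unfolding S_def by auto
  have finI: "finite I" using IY finY finite_subset by blast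
  have c1: "card I \<le> card (B - {e})"
  proof (rule ccontr)
    assume "\<not> card I \<le> card (B - {e})"
    then have "card (B - {e}) < card I" by simp
    then obtain x where x: "x \<in> I - (B - {e})" "indep (insert x (B - {e}))"
      using aug[OF iB0 iI] by blast
    have "x \<in> C - B" using x IY KB eK unfolding Y_def X_def by auto
    then show False using H x by blast
  qed
  have "card (B - {e}) < card B" using finB eB by (rule card_Diff1_less)
  then have "card I < card B" using c1 by linarith
  then obtain x where x: "x \<in> B - I" "indep (insert x I)" using aug[OF iI iB] by blast
  show False
  proof (cases "x = e")
    case True
    have "C \<union> K \<subseteq> insert x I" using XI True eC unfolding X_def by auto
    then show False using d down x by blast
  next
    case False
    then have "insert x I \<in> S" using x XI IY unfolding S_def Y_def by auto
    then have "card (insert x I) \<le> card I" using Imax2 by blast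
    then show False using x finI by simp
  qed
qed

lemma basis_exch:
  assumes m: "matroid E indep" and b: "basis E indep B" and eB: "e \<in> B"
    and fE: "f \<in> E" and fB: "f \<notin> B" and i: "indep (insert f (B - {e}))"
  shows "basis E indep (insert f (B - {e}))"
proof -
  have finE: "finite E" and sub: "\<And>I. indep I \<Longrightarrow> I \<subseteq> E"
    and aug: "\<And>I J. indep I \<Longrightarrow> indep J \<Longrightarrow> card I < card J \<Longrightarrow> \<exists>x\<in>J - I. indep (insert x I)"
    using m unfolding matroid_def by blast+
  have BE: "B \<subseteq> E" and iB: "indep B" and bm: "\<forall>x\<in>E - B. \<not> indep (insert x B)"
    using b unfolding basis_def by auto
  have finB: "finite B" using BE finE finite_subset by blast
  let ?B2 = "insert f (B - {e})"
  have "f \<notin> B - {e}" using fB by blast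
  then have "card ?B2 = Suc (card (B - {e}))" using finB by simp
  moreover have "Suc (card (B - {e})) = card B" using finB eB by (rule card_Suc_Diff1)
  ultimately have cB2: "card ?B2 = card B" by simp
  have "\<forall>x\<in>E - ?B2. \<not> indep (insert x ?B2)"
  proof (intro ballI notI)
    fix x assume x: "x \<in> E - ?B2" and ix: "indep (insert x ?B2)"
    have "card (insert x ?B2) = Suc (card B)" using x cB2 finB by simp
    then have "card B < card (insert x ?B2)" by simp
    then obtain y where y: "y \<in> insert x ?B2 - B" "indep (insert y B)" using aug[OF iB ix] by blast
    have "y \<in> E" using y sub ix by blast
    then show False using bm y by blast
  qed
  then show ?thesis unfolding basis_def using i BE fE by auto
qed

theorem lemma21:
  fixes E D K :: "'a set" and indep :: "'a set \<Rightarrow> bool"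
    and A :: "'a \<Rightarrow> real set" and w c :: "'a \<Rightarrow> real" and e :: 'a and C :: "'a set"
  assumes "wum E indep A w c"
    and "compatible_minor E indep A w c D K"
    and "\<forall>f\<in>minor_ground E D K. \<not> trivial A w f \<longrightarrow>
           \<not> ((w f = lower A f \<and>
                 (\<exists>C'. circuit (minor_ground E D K) (minor_indep E indep D K) C' \<and> f \<in> C' \<and>
                       (\<forall>g\<in>C'. w g \<le> w f)))
              \<or> (w f = upper A f \<and>
                 (\<exists>B'. basis (minor_ground E D K) (minor_indep E indep D K) B' \<and> f \<in> B' \<and>
                       f \<in> minor_ground E D K - span (minor_ground E D K) (minor_indep E indep D K) (B' - {f}) \<and>
                       (\<forall>g\<in>minor_ground E D K - span (minor_ground E D K) (minor_indep E indep D K) (B' - {f}).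
                           w f \<le> w g))))"
    and "e \<in> minor_ground E D K"
    and "trivial A w e"
    and "circuit (minor_ground E D K) (minor_indep E indep D K) C"
    and "e \<in> C"
    and "\<forall>g\<in>C. w g \<le> w e"
  shows "compatible_minor E indep A w c (D \<union> {e}) K"
proof -
  note wm = assms(1) and cm = assms(2) and cond = assms(3) and eG = assms(4) and te = assms(5)
    and circ = assms(6) and eC = assms(7) and emax = assms(8)
  have m: "matroid E indep" and wA: "\<forall>x\<in>E. uncertainty_set (A x) \<and> w x \<in> A x"
    using wm unfolding wum_def by auto
  have finE: "finite E" and sub: "\<And>I. indep I \<Longrightarrow> I \<subseteq> E"
    and down: "\<And>I J. indep J \<Longrightarrow> I \<subseteq> J \<Longrightarrow> indep I"
    using m unfolding matroid_def by blast+
  obtain Q B where DE: "D \<subseteq> E" and KE: "K \<subseteq> E" and QE: "Q \<subseteq> E"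
    and cQ: "sum c Q = opt_cost E indep A w c" and ver: "verifies E indep A w Q B"
    and KB: "K \<subseteq> B" and DB: "D \<inter> B = {}"
    using cm unfolding compatible_minor_def by blast
  have eE: "e \<in> E" and eK: "e \<notin> K" and eD: "e \<notin> D" using eG unfolding minor_ground_def by auto
  have wa: "weight_assignment E A w" using wA unfolding weight_assignment_def by auto
  have "is_MWB E indep w B" using ver wa unfolding verifies_def consistent_def by blast
  then have b: "basis E indep B" and Bmin: "\<And>B'. basis E indep B' \<Longrightarrow> sum w B \<le> sum w B'"
    unfolding is_MWB_def by auto
  have BE: "B \<subseteq> E" and iB: "indep B" using b unfolding basis_def by auto
  have finB: "finite B" using BE finE finite_subset by blast
  show ?thesis
  proof (cases "e \<in> B")
    case False
    then show ?thesis unfolding compatible_minor_def using DE KE QE cQ ver KB DB eE by blast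
  next
    case eB: True
    have CG: "C \<subseteq> E - (D \<union> K)" and ndC: "\<not> minor_indep E indep D K C"
      and allsub: "\<forall>C'. C' \<subset> C \<longrightarrow> minor_indep E indep D K C'"
      using circ unfolding circuit_def minor_ground_def by auto
    have iK: "indep K" using down iB KB by blast
    have rK: "rank indep K = card K" using rank_indep[OF m iK] .
    have finC: "finite C" using CG finE finite_subset by blast
    have finK: "finite K" using KE finE finite_subset by blast
    have "minor_indep E indep D K (C - {e})" using allsub eC by blast
    then have r1: "rank indep ((C - {e}) \<union> K) = card ((C - {e}) \<union> K)"
      unfolding minor_indep_def using rK finC finK CG
      by (subst card_Un_disjoint) auto
    have i1: "indep ((C - {e}) \<union> K)" using rank_dep[OF m _ r1] CG KE by auto
    have d: "\<not> indep (C \<union> K)"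
    proof
      assume "indep (C \<union> K)"
      then have "rank indep (C \<union> K) = card (C \<union> K)" using rank_indep[OF m] by blast
      then have "rank indep (C \<union> K) = card C + rank indep K"
        using rK finC finK CG by (subst (asm) card_Un_disjoint) auto
      then show False using ndC CG unfolding minor_indep_def by blast
    qed
    obtain f where fC: "f \<in> C" and fB: "f \<notin> B" and if2: "indep (insert f (B - {e}))"
      using exchange[OF m b KB i1 d eC eB eK] CG by blast
    have fE: "f \<in> E" and fD: "f \<notin> D" and fK: "f \<notin> K" using fC CG by auto
    have fe: "f \<noteq> e" using fB eB by blast
    define B2 where "B2 = insert f (B - {e})"
    have b2: "basis E indep B2" unfolding B2_def using basis_exch[OF m b eB fE fB if2] .
    have sumB: "\<And>w'. sum w' B = w' e + sum w' (B - {e})"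
      using finB eB by (simp add: sum.remove)
    have sumB2: "\<And>w'. sum w' B2 = w' f + sum w' (B - {e})"
      unfolding B2_def using finB fB by simp
    have wfe: "w f \<le> w e" using emax fC by blast
    have ewf: "w e \<le> w f" using Bmin[OF b2] sumB[of w] sumB2[of w] by simp
    have Aee: "A e = {w e}" using te unfolding trivial_def .
    have key: "\<And>w'. weight_assignment E A w' \<Longrightarrow> consistent w Q w' \<Longrightarrow> w' f = w f"
    proof -
      fix w' assume wa': "weight_assignment E A w'" and cs: "consistent w Q w'"
      show "w' f = w f"
      proof (cases "trivial A w f \<or> f \<in> Q")
        case True
        then show ?thesis
        proof
          assume "trivial A w f"
          then show ?thesis using wa' fE unfolding weight_assignment_def trivial_def by auto
        next
          assume "f \<in> Q" then show ?thesis using cs unfolding consistent_def by auto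
        qed
      next
        case False
        have fG: "f \<in> minor_ground E D K" using fC CG unfolding minor_ground_def by auto
        have unc: "uncertainty_set (A f)" and wfA: "w f \<in> A f" using wA fE by auto
        have ne: "A f \<noteq> {}" using wfA by blast
        have lb: "\<And>a. a \<in> A f \<Longrightarrow> w e \<le> a"
        proof -
          fix a assume a: "a \<in> A f"
          define w'' where "w'' = w(f := a)"
          have "weight_assignment E A w''" using wa a unfolding w''_def weight_assignment_def by auto
          moreover have "consistent w Q w''" using False unfolding w''_def consistent_def by auto
          ultimately have "is_MWB E indep w'' B" using ver unfolding verifies_def by blast
          then have "sum w'' B \<le> sum w'' B2" using b2 unfolding is_MWB_def by blast
          moreover have "sum w'' (B - {e}) = sum w (B - {e})" unfolding w''_def
            using fB by (intro sum.cong) auto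
          ultimately show "w e \<le> a" using sumB[of w''] sumB2[of w''] fe unfolding w''_def by simp
        qed
        have "w e \<le> Inf (A f)" using lb ne by (meson cInf_greatest)
        moreover have "Inf (A f) \<le> w f" using unc_bdd_below[OF unc] wfA by (meson cInf_lower)
        ultimately have "w f = lower A f" using wfe unfolding lower_def by linarith
        moreover have "\<forall>g\<in>C. w g \<le> w f" using emax wfe ewf by auto
        ultimately have X: "w f = lower A f \<and> (\<exists>C'. circuit (minor_ground E D K) (minor_indep E indep D K) C' \<and> f \<in> C' \<and> (\<forall>g\<in>C'. w g \<le> w f))"
          using circ fC by blast
        have "\<not> trivial A w f" using False by blast
        then have False using bspec[OF cond fG] X by blast
        then show ?thesis ..
      qed
    qed
    have ver2: "verifies E indep A w Q B2" unfolding verifies_def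
    proof (intro allI impI)
      fix w' assume h: "weight_assignment E A w' \<and> consistent w Q w'"
      then have mw: "is_MWB E indep w' B" using ver unfolding verifies_def by blast
      have "w' e = w e" using h eE Aee unfolding weight_assignment_def by auto
      moreover have "w' f = w f" using key h by blast
      ultimately have "sum w' B2 = sum w' B" using sumB[of w'] sumB2[of w'] wfe ewf by simp
      then show "is_MWB E indep w' B2" using mw b2 unfolding is_MWB_def by simp
    qed
    have "K \<subseteq> B2" using KB eK unfolding B2_def by auto
    moreover have "(D \<union> {e}) \<inter> B2 = {}" using DB fD fe unfolding B2_def by auto
    ultimately show ?thesis unfolding compatible_minor_def using DE KE QE cQ ver2 eE by blast
  qed
qed

end
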